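(* Let $0<p<1$, $q=0$, $0<\theta<1$ and $\varepsilon>0$. Let \[ m_{\mathrm{COMP},\mathrm{rev}Z}=\frac{1}{1-\theta}\min_{d>0}\left\{\frac{1}{-d\log\big(1-e^{-d}(1-p)\big)}\right\}k\log(n/k). \] If $m>(1+\varepsilon)m_{\mathrm{COMP},\mathrm{rev}Z}$, then (with parameters chosen suitably) noisy COMP recovers $\sigma$ with high probability given $G$ and $\hat\sigma$.
   Context: Noisy group testing model (reverse Z channel): $n$ individuals, $k\sim n^{\theta}$ infected; $\sigma\in\{0,1\}^n$ uniformly random of Hamming weight $k$. Constant-column design $G$: $m=ck\log(n/k)$ tests, each individual independently assigned to exactly $\Delta=cd\log(n/k)$ distinct tests chosen uniformly at random. A test is truly positive iff it contains an infected individual. Displayed results $\hat\sigma$: independently, a truly negative test is displayed positive with probability $p$, a truly positive test is displayed negative with probability $q$ (here $q=0$). Noisy COMP with threshold $\alpha$: declare healthy every individual appearing in at least $\alpha\Delta$ displayed negative tests, the rest infected. $\log$ natural. "With high probability": probability $\to1$ as $n\to\infty$. *)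

theory Defs
  imports "HOL-Probability.Probability" "HOL-Probability.Product_PMF"
begin

text \<open>The infection vector sigma is represented by its support S (the set of infected
  individuals), uniformly random among the k-subsets of {0..<n}.
  A design G maps each individual to the set of (distinct) tests it joins.\<close>

definition infected_sets :: "nat \<Rightarrow> nat \<Rightarrow> nat set set" where
  "infected_sets n k = {S. S \<subseteq> {0..<n} \<and> card S = k}"

definition constant_column_design :: "nat \<Rightarrow> nat \<Rightarrow> nat \<Rightarrow> (nat \<Rightarrow> nat set) pmf" where
  "constant_column_design n m Delta =
     Pi_pmf {0..<n} {} (\<lambda>i. pmf_of_set {T. T \<subseteq> {0..<m} \<and> card T = Delta})"

definition truly_positive :: "nat set \<Rightarrow> (nat \<Rightarrow> nat set) \<Rightarrow> nat \<Rightarrow> bool" where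
  "truly_positive S G a = (\<exists>i\<in>S. a \<in> G i)"

text \<open>Displayed results (True = displayed positive): independently, a truly negative
  test is displayed positive with probability p, a truly positive test is displayed
  negative with probability q.\<close>
definition displayed_results ::
  "nat \<Rightarrow> real \<Rightarrow> real \<Rightarrow> nat set \<Rightarrow> (nat \<Rightarrow> nat set) \<Rightarrow> (nat \<Rightarrow> bool) pmf" where
  "displayed_results m p q S G =
     Pi_pmf {0..<m} False
       (\<lambda>a. if truly_positive S G a then bernoulli_pmf (1 - q) else bernoulli_pmf p)"

definition noisy_COMP ::
  "nat \<Rightarrow> nat \<Rightarrow> real \<Rightarrow> (nat \<Rightarrow> nat set) \<Rightarrow> (nat \<Rightarrow> bool) \<Rightarrow> nat set" where
  "noisy_COMP n Delta alpha G D =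
     {i \<in> {0..<n}. \<not> (real (card {a \<in> G i. \<not> D a}) \<ge> alpha * real Delta)}"

definition COMP_success_prob ::
  "nat \<Rightarrow> nat \<Rightarrow> nat \<Rightarrow> nat \<Rightarrow> real \<Rightarrow> real \<Rightarrow> real \<Rightarrow> real" where
  "COMP_success_prob n k m Delta p q alpha =
     measure_pmf.prob
       (do { S \<leftarrow> pmf_of_set (infected_sets n k);
             G \<leftarrow> constant_column_design n m Delta;
             D \<leftarrow> displayed_results m p q S G;
             return_pmf (noisy_COMP n Delta alpha G D = S) })
       {True}"

end

theory Submission imports Defs begin

definition Sets :: "nat \<Rightarrow> nat \<Rightarrow> nat set set" where
  "Sets m D = {T. T \<subseteq> {0..<m} \<and> card T = D}"

lemma Sets_finite: "finite (Sets m D)"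
  unfolding Sets_def by (rule finite_subset[of _ "Pow {0..<m}"]) auto

lemma Sets_card: "card (Sets m D) = m choose D"
  unfolding Sets_def using n_subsets[of "{0..<m}" D] by simp

lemma Sets_nonempty: "D \<le> m \<Longrightarrow> Sets m D \<noteq> {}"
  using Sets_card[of m D] by (auto simp: card_eq_0_iff)

lemma binom_ratio:
  fixes c D m :: nat
  assumes "c \<le> D" "D \<le> m"
  shows "real ((m - c) choose (D - c)) \<le> real (m choose D) * (real D / real m) ^ c"
  using assms(1)
proof (induction c)
  case 0 then show ?case by simp
next
  case (Suc c)
  define a where "a = m - c"
  define b where "b = D - c"
  have b1: "b \<ge> 1" using Suc.prems unfolding b_def by simp
  have ab: "a \<ge> b" using Suc.prems assms(2) unfolding a_def b_def by simp
  have m0: "m > 0" using Suc.prems assms(2) by simp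
  have eq: "real a * real ((a - 1) choose (b - 1)) = real (a choose b) * real b"
  proof -
    have "Suc (a - 1) * ((a - 1) choose (b - 1)) = (Suc (a - 1) choose Suc (b - 1)) * Suc (b - 1)"
      by (rule Suc_times_binomial_eq)
    moreover have "Suc (a - 1) = a" "Suc (b - 1) = b" using b1 ab by auto
    ultimately show ?thesis by (metis of_nat_mult)
  qed
  have a0: "real a > 0" using ab b1 by simp
  have ratio: "real b / real a \<le> real D / real m"
  proof -
    have dc: "real D * real c \<le> real m * real c" by (intro mult_right_mono) (use assms(2) in auto)
    have rb: "real b = real D - real c" and ra: "real a = real m - real c"
      using Suc.prems assms(2) by (simp_all add: a_def b_def of_nat_diff)
    have "real b * real m \<le> real D * real a"
      unfolding rb ra using dc by (simp add: left_diff_distrib right_diff_distrib mult.commute)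
    then show ?thesis using a0 m0 by (simp add: divide_simps)
  qed
  have e1: "m - Suc c = a - 1" and e2: "D - Suc c = b - 1" unfolding a_def b_def by arith+
  have "real ((m - Suc c) choose (D - Suc c)) = real ((a - 1) choose (b - 1))"
    unfolding e1 e2 ..
  also have "\<dots> = real (a choose b) * (real b / real a)"
    using eq a0 by (simp add: field_simps)
  also have "\<dots> \<le> real (a choose b) * (real D / real m)"
    by (intro mult_left_mono ratio) simp
  also have "\<dots> \<le> real (m choose D) * (real D / real m) ^ c * (real D / real m)"
    using Suc.IH Suc.prems unfolding a_def b_def by (intro mult_right_mono) auto
  finally show ?case by (simp add: ac_simps)
qed

lemma card_supersets:
  assumes "finite C" "C \<subseteq> {0..<m}" "card C \<le> D"
  shows "card (Sets m D \<inter> {G. C \<subseteq> G}) = (m - card C) choose (D - card C)"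
proof -
  have "bij_betw (\<lambda>H. H \<union> C) {H. H \<subseteq> {0..<m} - C \<and> card H = D - card C} (Sets m D \<inter> {G. C \<subseteq> G})"
  proof (rule bij_betw_byWitness[where f' = "\<lambda>G. G - C"])
    show "\<forall>a\<in>{H. H \<subseteq> {0..<m} - C \<and> card H = D - card C}. a \<union> C - C = a" by auto
    show "\<forall>a'\<in>Sets m D \<inter> {G. C \<subseteq> G}. a' - C \<union> C = a'" by auto
    show "(\<lambda>H. H \<union> C) ` {H. H \<subseteq> {0..<m} - C \<and> card H = D - card C} \<subseteq> Sets m D \<inter> {G. C \<subseteq> G}"
    proof safe
      fix H assume H: "H \<subseteq> {0..<m} - C" "card (H) = D - card C"
      have "finite H" using H(1) finite_subset by blast
      then have "card (H \<union> C) = card H + card C" using H(1) assms(1) by (subst card_Un_disjoint) auto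
      then show "H \<union> C \<in> Sets m D" using H assms unfolding Sets_def by auto
    qed
    show "(\<lambda>G. G - C) ` (Sets m D \<inter> {G. C \<subseteq> G}) \<subseteq> {H. H \<subseteq> {0..<m} - C \<and> card H = D - card C}"
    proof safe
      fix G assume G: "G \<in> Sets m D" "C \<subseteq> G"
      have "finite G" using G(1) unfolding Sets_def using finite_subset by blast
      then show "card (G - C) = D - card C" using G assms unfolding Sets_def by (simp add: card_Diff_subset assms(1))
    qed (auto simp: Sets_def)
  qed
  then have "card (Sets m D \<inter> {G. C \<subseteq> G}) = card {H. H \<subseteq> {0..<m} - C \<and> card H = D - card C}"
    by (metis bij_betw_same_card)
  also have "\<dots> = card ({0..<m} - C) choose (D - card C)" by (rule n_subsets) simp
  also have "card ({0..<m} - C) = m - card C" using assms by (simp add: card_Diff_subset)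
  finally show ?thesis .
qed

lemma prob_subset:
  assumes "D \<le> m" "0 < m"
  shows "measure_pmf.prob (pmf_of_set (Sets m D)) {G. C \<subseteq> G} \<le> (real D / real m) ^ card C"
proof (cases "finite C \<and> C \<subseteq> {0..<m} \<and> card C \<le> D")
  case True
  have "measure_pmf.prob (pmf_of_set (Sets m D)) {G. C \<subseteq> G} = real (card (Sets m D \<inter> {G. C \<subseteq> G})) / real (card (Sets m D))"
    using Sets_finite Sets_nonempty[OF assms(1)] by (simp add: measure_pmf_of_set)
  also have "\<dots> = real ((m - card C) choose (D - card C)) / real (m choose D)"
    using True by (simp add: card_supersets Sets_card)
  also have "\<dots> \<le> (real D / real m) ^ card C"
  proof -
    have "real (m choose D) > 0" using assms by simp
    then show ?thesis using binom_ratio[of "card C" D m] True assms by (simp add: divide_simps mult.commute)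
  qed
  finally show ?thesis .
next
  case False
  have "Sets m D \<inter> {G. C \<subseteq> G} = {}"
  proof (rule ccontr)
    assume "Sets m D \<inter> {G. C \<subseteq> G} \<noteq> {}"
    then obtain G where G: "G \<subseteq> {0..<m}" "card G = D" "C \<subseteq> G" unfolding Sets_def by auto
    have "finite G" using G(1) finite_subset by blast
    then have "finite C" "card C \<le> D" using G card_mono finite_subset by (metis, metis)
    then show False using False G by auto
  qed
  then have "measure_pmf.prob (pmf_of_set (Sets m D)) {G. C \<subseteq> G} = 0"
    using Sets_finite Sets_nonempty[OF assms(1)] by (simp add: measure_pmf_of_set)
  then show ?thesis by simp
qed

lemma finite_set_pmf_Sets: "D \<le> m \<Longrightarrow> finite (set_pmf (pmf_of_set (Sets m D)))"
  using Sets_finite Sets_nonempty by simp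

lemma prod_if_pow: "finite B \<Longrightarrow> (\<Prod>x\<in>B. if x \<in> G then 1 else (g::real)) = g ^ card (B - G)"
proof -
  assume fB: "finite B"
  have "(\<Prod>x\<in>B. if x \<in> G then 1 else g) = (\<Prod>x\<in>B - G. g)"
    using fB by (intro prod.mono_neutral_cong_right) auto
  then show ?thesis by simp
qed

lemma prod_indicator_subset: "finite X \<Longrightarrow> (\<Prod>x\<in>X. indicator {G. x \<in> G} G :: real) = indicator {G. X \<subseteq> G} G"
  by (cases "X \<subseteq> G") (auto simp: indicator_def prod_zero intro!: prod.neutral)

lemma L4:
  assumes "D \<le> m" "0 < m" "0 \<le> g" "g \<le> 1" "finite B"
  shows "measure_pmf.expectation (pmf_of_set (Sets m D)) (\<lambda>G. g ^ card (B - G))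
           \<le> (g + (1 - g) * (real D / real m)) ^ card B"
proof -
  let ?M = "pmf_of_set (Sets m D)"
  have pw: "g ^ card (B - G) = (\<Sum>X\<in>Pow B. ((1-g)^card X * g ^ card (B - X)) * indicator {G. X \<subseteq> G} G)" for G
  proof -
    have "(\<Prod>x\<in>B. (1-g) * indicator {G. x \<in> G} G + g) = (\<Prod>x\<in>B. if x \<in> G then 1 else g)"
      by (rule prod.cong) (auto simp: indicator_def)
    then have "g ^ card (B - G) = (\<Prod>x\<in>B. (1-g) * indicator {G. x \<in> G} G + g)"
      using prod_if_pow[OF assms(5), of G g] by simp
    also have "\<dots> = (\<Sum>X\<in>Pow B. (\<Prod>x\<in>X. (1-g) * indicator {G. x \<in> G} G) * (\<Prod>x\<in>B - X. g))"
      by (rule prod_add[OF assms(5)])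
    also have "\<dots> = (\<Sum>X\<in>Pow B. ((1-g)^card X * g ^ card (B - X)) * indicator {G. X \<subseteq> G} G)"
    proof (intro sum.cong refl)
      fix X assume "X \<in> Pow B"
      then have fX: "finite X" using assms(5) finite_subset by auto
      show "(\<Prod>x\<in>X. (1-g) * indicator {G. x \<in> G} G) * (\<Prod>x\<in>B - X. g) = ((1-g)^card X * g ^ card (B - X)) * indicator {G. X \<subseteq> G} G"
        using fX by (simp add: prod.distrib prod_indicator_subset)
    qed
    finally show ?thesis .
  qed
  have "measure_pmf.expectation ?M (\<lambda>G. g ^ card (B - G))
        = measure_pmf.expectation ?M (\<lambda>G. \<Sum>X\<in>Pow B. ((1-g)^card X * g ^ card (B - X)) * indicator {G. X \<subseteq> G} G)"
    by (intro Bochner_Integration.integral_cong refl pw)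
  also have "\<dots> = (\<Sum>X\<in>Pow B. measure_pmf.expectation ?M (\<lambda>G. ((1-g)^card X * g ^ card (B - X)) * indicator {G. X \<subseteq> G} G))"
    by (rule Bochner_Integration.integral_sum) (simp add: integrable_measure_pmf_finite finite_set_pmf_Sets[OF assms(1)])
  also have "\<dots> = (\<Sum>X\<in>Pow B. ((1-g)^card X * g ^ card (B - X)) * measure_pmf.prob ?M {G. X \<subseteq> G})"
    by simp
  also have "\<dots> \<le> (\<Sum>X\<in>Pow B. ((1-g)^card X * g ^ card (B - X)) * (real D / real m) ^ card X)"
    using assms by (intro sum_mono mult_left_mono prob_subset) auto
  also have "\<dots> = (\<Sum>X\<in>Pow B. (\<Prod>x\<in>X. (1-g) * (real D / real m)) * (\<Prod>x\<in>B - X. g))"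
    by (intro sum.cong refl) (simp only: prod_constant power_mult_distrib mult_ac)
  also have "\<dots> = (\<Prod>x\<in>B. (1-g) * (real D / real m) + g)"
    by (rule prod_add[OF assms(5), symmetric])
  also have "\<dots> = (g + (1 - g) * (real D / real m)) ^ card B"
    by (simp add: add.commute)
  finally show ?thesis .
qed


lemma integral_return_pmf_real: "measure_pmf.expectation (return_pmf x) (f :: _ \<Rightarrow> real) = f x"
  by (subst integral_measure_pmf_real[of "{x}"]) auto

lemma integral_bind_pmf_real:
  fixes f :: "'b \<Rightarrow> real"
  assumes "\<And>x. \<bar>f x\<bar> \<le> B"
  shows "measure_pmf.expectation (bind_pmf M N) f = measure_pmf.expectation M (\<lambda>x. measure_pmf.expectation (N x) f)"
  unfolding measure_pmf_bind
  by (rule integral_bind[where K="count_space UNIV" and B=B and B'=1]) (auto simp: assms measure_pmf_in_subprob_algebra)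

lemma integral_pair_pmf_real:
  fixes f :: "'a \<times> 'b \<Rightarrow> real"
  assumes "\<And>x. \<bar>f x\<bar> \<le> B"
  shows "measure_pmf.expectation (pair_pmf A C) f = measure_pmf.expectation A (\<lambda>a. measure_pmf.expectation C (\<lambda>b. f (a, b)))"
  unfolding pair_pmf_def
  apply (subst integral_bind_pmf_real[where B=B], rule assms)
  apply (subst integral_bind_pmf_real[where B=B], rule assms)
  apply (simp add: integral_return_pmf_real)
  done

abbreviation UU :: "nat \<Rightarrow> nat \<Rightarrow> nat set pmf" where
  "UU m D \<equiv> pmf_of_set (Sets m D)"

lemma set_UU: "D \<le> m \<Longrightarrow> set_pmf (UU m D) = Sets m D"
  using Sets_finite Sets_nonempty by simp

lemma pow_bound: "0 \<le> (g::real) \<Longrightarrow> g \<le> 1 \<Longrightarrow> \<bar>g ^ n\<bar> \<le> 1"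
  by (simp add: power_le_one)

lemma finite_set_Pi_UU: "finite S \<Longrightarrow> D \<le> m \<Longrightarrow> finite (set_pmf (Pi_pmf S {} (\<lambda>_. UU m D)))"
  by (simp add: set_Pi_pmf set_UU finite_PiE_dflt Sets_finite o_def)

lemma lemA:
  fixes S :: "nat set"
  assumes "D \<le> m" "0 < m" "0 \<le> g" "g \<le> 1" "finite S"
  shows "\<And>T. finite T \<Longrightarrow> measure_pmf.expectation (Pi_pmf S {} (\<lambda>_. UU m D)) (\<lambda>G. g ^ card (T - \<Union>(G ` S)))
           \<le> (1 - (1 - g) * (1 - real D / real m) ^ card S) ^ card T"
  using assms(5)
proof (induction S rule: finite_induct)
  case empty
  then show ?case by (simp add: integral_return_pmf_real)
next
  case (insert j S T)
  define g' where "g' = 1 - (1 - g) * (1 - real D / real m) ^ card S"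
  have Dm: "real D / real m \<le> 1" "0 \<le> real D / real m" using assms by auto
  have rho: "0 \<le> (1 - real D / real m) ^ card S" "(1 - real D / real m) ^ card S \<le> 1"
    using Dm by (auto intro: power_le_one)
  have g'0: "0 \<le> g'" unfolding g'_def using assms rho
    by (smt (verit) mult_left_le_one_le)
  have g'1: "g' \<le> 1" unfolding g'_def using assms rho by (simp add: mult_nonneg_nonneg)
  have img: "(f(j := y)) ` insert j S = insert y (f ` S)" for f :: "nat \<Rightarrow> nat set" and y
    using insert.hyps(2) by auto
  have img2: "(f(j := y)) ` S = f ` S" for f :: "nat \<Rightarrow> nat set" and y
    using insert.hyps(2) by auto
  have Sj: "S \<inter> {x. x \<noteq> j} = S" using insert.hyps(2) by auto
  have dd: "\<And>A B C. (A::nat set) - (B \<union> C) = A - B - C" by blast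
  have "measure_pmf.expectation (Pi_pmf (insert j S) {} (\<lambda>_. UU m D)) (\<lambda>G. g ^ card (T - \<Union>(G ` insert j S)))
      = measure_pmf.expectation (map_pmf (\<lambda>(y,f). f(j:=y)) (pair_pmf (UU m D) (Pi_pmf S {} (\<lambda>_. UU m D))))
           (\<lambda>G. g ^ card (T - \<Union>(G ` insert j S)))"
    by (simp only: Pi_pmf_insert[OF insert.hyps])
  also have "\<dots> = measure_pmf.expectation (pair_pmf (UU m D) (Pi_pmf S {} (\<lambda>_. UU m D)))
           (\<lambda>x. g ^ card (T - \<Union>(((\<lambda>(y,f). f(j:=y)) x) ` insert j S)))"
    by (rule integral_map_pmf)
  also have "\<dots> = measure_pmf.expectation (pair_pmf (UU m D) (Pi_pmf S {} (\<lambda>_. UU m D)))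
           (\<lambda>(y, f). g ^ card ((T - y) - \<Union>(f ` S)))"
    by (intro Bochner_Integration.integral_cong refl) (simp add: dd img2 Sj split: prod.split)
  also have "\<dots> = measure_pmf.expectation (UU m D) (\<lambda>y. measure_pmf.expectation (Pi_pmf S {} (\<lambda>_. UU m D))
           (\<lambda>f. g ^ card ((T - y) - \<Union>(f ` S))))"
    by (subst integral_pair_pmf_real[where B=1]) (auto simp: pow_bound assms power_le_one)
  also have "\<dots> \<le> measure_pmf.expectation (UU m D) (\<lambda>y. g' ^ card (T - y))"
    unfolding g'_def
    by (intro integral_mono insert.IH) (auto simp: insert.prems integrable_measure_pmf_finite finite_set_pmf_Sets assms)
  also have "\<dots> \<le> (g' + (1 - g') * (real D / real m)) ^ card T"
    by (rule L4) (use assms g'0 g'1 insert.prems in auto)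
  also have "g' + (1 - g') * (real D / real m) = 1 - (1 - g) * (1 - real D / real m) ^ card (insert j S)"
    using insert.hyps assms(2) unfolding g'_def by (simp add: field_simps)
  finally show ?case .
qed


lemma lemB:
  fixes S :: "nat set"
  assumes "D \<le> m" "0 < m" "0 \<le> g" "g \<le> 1" "i < n" "i \<notin> S" "S \<subseteq> {0..<n}"
  shows "measure_pmf.expectation (Pi_pmf {0..<n} {} (\<lambda>_. UU m D)) (\<lambda>G. g ^ card (G i - \<Union>(G ` S)))
           \<le> (1 - (1 - g) * (1 - real D / real m) ^ card S) ^ D"
proof -
  let ?P = "\<lambda>_::nat. UU m D"
  let ?h = "\<lambda>G::nat \<Rightarrow> nat set. g ^ card (G i - \<Union>(G ` S))"
  have fS: "finite S" using assms(7) finite_subset by blast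
  have sub: "insert i S \<subseteq> {0..<n}" using assms by auto
  have "measure_pmf.expectation (Pi_pmf {0..<n} {} ?P) ?h
      = measure_pmf.expectation (Pi_pmf {0..<n} {} ?P) (\<lambda>f. ?h (\<lambda>x. if x \<in> insert i S then f x else {}))"
    by (intro Bochner_Integration.integral_cong refl) auto
  also have "\<dots> = measure_pmf.expectation (map_pmf (\<lambda>f x. if x \<in> insert i S then f x else {}) (Pi_pmf {0..<n} {} ?P)) ?h"
    by simp
  also have "\<dots> = measure_pmf.expectation (Pi_pmf (insert i S) {} ?P) ?h"
    by (subst Pi_pmf_subset[OF _ sub]) auto
  also have "\<dots> = measure_pmf.expectation (map_pmf (\<lambda>(y,f). f(i:=y)) (pair_pmf (UU m D) (Pi_pmf S {} ?P))) ?h"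
    by (simp only: Pi_pmf_insert[OF fS assms(6)])
  also have "\<dots> = measure_pmf.expectation (pair_pmf (UU m D) (Pi_pmf S {} ?P)) (\<lambda>x. ?h ((\<lambda>(y,f). f(i:=y)) x))"
    by (rule integral_map_pmf)
  also have "\<dots> = measure_pmf.expectation (pair_pmf (UU m D) (Pi_pmf S {} ?P)) (\<lambda>(y,f). g ^ card (y - \<Union>(f ` S)))"
  proof -
    have "(f(i := y)) ` S = f ` S" for f :: "nat \<Rightarrow> nat set" and y using assms(6) by auto
    then show ?thesis by (intro Bochner_Integration.integral_cong refl) (auto split: prod.split)
  qed
  also have "\<dots> = measure_pmf.expectation (UU m D) (\<lambda>y. measure_pmf.expectation (Pi_pmf S {} ?P) (\<lambda>f. g ^ card (y - \<Union>(f ` S))))"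
    by (subst integral_pair_pmf_real[where B=1]) (auto simp: assms power_le_one)
  also have "\<dots> \<le> measure_pmf.expectation (UU m D) (\<lambda>y. (1 - (1 - g) * (1 - real D / real m) ^ card S) ^ card y)"
  proof (rule integral_mono_AE)
    show "AE y in measure_pmf (UU m D). measure_pmf.expectation (Pi_pmf S {} ?P) (\<lambda>f. g ^ card (y - \<Union>(f ` S)))
           \<le> (1 - (1 - g) * (1 - real D / real m) ^ card S) ^ card y"
    proof (rule AE_pmfI)
      fix y assume "y \<in> set_pmf (UU m D)"
      then have "y \<in> Sets m D" using set_UU[OF assms(1)] by simp
      then have "finite y" by (auto simp: Sets_def intro: finite_subset[of _ "{0..<m}"])
      then show "measure_pmf.expectation (Pi_pmf S {} ?P) (\<lambda>f. g ^ card (y - \<Union>(f ` S)))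
           \<le> (1 - (1 - g) * (1 - real D / real m) ^ card S) ^ card y"
        by (rule lemA[OF assms(1-4) fS])
    qed
  qed (auto simp: integrable_measure_pmf_finite finite_set_pmf_Sets assms)
  also have "\<dots> = measure_pmf.expectation (UU m D) (\<lambda>y. (1 - (1 - g) * (1 - real D / real m) ^ card S) ^ D)"
    using set_UU[OF assms(1)] unfolding Sets_def by (intro integral_cong_AE AE_pmfI) auto
  also have "\<dots> = (1 - (1 - g) * (1 - real D / real m) ^ card S) ^ D"
    by simp
  finally show ?thesis .
qed

lemma noise:
  assumes "finite T" "T \<subseteq> {0..<m}" "0 \<le> p" "p \<le> 1" "0 \<le> mu"
  shows "measure_pmf.expectation (displayed_results m p 0 S G) (\<lambda>D. mu ^ card {a\<in>T. \<not> D a})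
           = (p + (1 - p) * mu) ^ card (T - \<Union>(G ` S))"
proof -
  let ?f = "\<lambda>a (v::bool). if a \<in> T then (if v then 1 else mu) else (1::real)"
  have fin: "finite (set_pmf (M :: bool pmf))" for M by (rule finite_subset[OF subset_UNIV]) simp
  have "mu ^ card {a\<in>T. \<not> D a} = (\<Prod>a\<in>{0..<m}. ?f a (D a))" for D :: "nat \<Rightarrow> bool"
  proof -
    have "(\<Prod>a\<in>{0..<m}. ?f a (D a)) = (\<Prod>a\<in>T. if a \<in> {a. D a} then 1 else mu)"
      using assms(1,2) by (intro prod.mono_neutral_cong_right) auto
    also have "\<dots> = mu ^ card (T - {a. D a})" by (rule prod_if_pow[OF assms(1)])
    also have "T - {a. D a} = {a\<in>T. \<not> D a}" by auto
    finally show ?thesis by simp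
  qed
  then have "measure_pmf.expectation (displayed_results m p 0 S G) (\<lambda>D. mu ^ card {a\<in>T. \<not> D a})
      = measure_pmf.expectation (displayed_results m p 0 S G) (\<lambda>D. \<Prod>a\<in>{0..<m}. ?f a (D a))"
    by simp
  also have "\<dots> = (\<Prod>a\<in>{0..<m}. measure_pmf.expectation
        (if truly_positive S G a then bernoulli_pmf (1 - 0) else bernoulli_pmf p) (\<lambda>v. ?f a v))"
    unfolding displayed_results_def
    by (rule expectation_prod_Pi_pmf) (auto simp: integrable_measure_pmf_finite fin assms(5))
  also have "\<dots> = (\<Prod>a\<in>{0..<m}. if a \<in> T then (if a \<in> \<Union>(G ` S) then 1 else p + (1 - p) * mu) else 1)"
    by (intro prod.cong refl) (auto simp: assms truly_positive_def algebra_simps)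
  also have "\<dots> = (\<Prod>a\<in>T. if a \<in> \<Union>(G ` S) then 1 else p + (1 - p) * mu)"
    using assms(1,2) by (intro prod.mono_neutral_cong_right) auto
  also have "\<dots> = (p + (1 - p) * mu) ^ card (T - \<Union>(G ` S))"
    by (rule prod_if_pow[OF assms(1)])
  finally show ?thesis .
qed


lemma set_bernoulli_1: "set_pmf (bernoulli_pmf 1) = {True}"
proof -
  have "False \<notin> set_pmf (bernoulli_pmf 1)" by (simp add: set_pmf_eq)
  moreover have "set_pmf (bernoulli_pmf 1) \<noteq> {}" by (rule set_pmf_not_empty)
  ultimately show ?thesis by (metis (full_types) insertI1 subsetI subset_singletonD)
qed

lemma set_UU': "D \<le> m \<Longrightarrow> set_pmf (pmf_of_set {T. T \<subseteq> {0..<m} \<and> card T = D}) = {T. T \<subseteq> {0..<m} \<and> card T = D}"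
  using set_UU[of D m] by (simp add: Sets_def)

lemma key_det:
  assumes G: "G \<in> set_pmf (constant_column_design n m Dl)" and Dlm: "Dl \<le> m"
    and Dr: "Dr \<in> set_pmf (displayed_results m p 0 S G)"
    and S: "S \<subseteq> {0..<n}" and pos: "alpha * real Dl > 0"
    and ne: "noisy_COMP n Dl alpha G Dr \<noteq> S"
  shows "\<exists>i\<in>{0..<n} - S. real (card {a \<in> G i. \<not> Dr a}) < alpha * real Dl"
proof (rule ccontr)
  assume H: "\<not> ?thesis"
  have Gi: "G i \<subseteq> {0..<m}" if "i < n" for i
    using G that Dlm unfolding constant_column_design_def
    by (auto simp: set_Pi_pmf PiE_dflt_def set_UU')
  have Da: "Dr a" if "a < m" "truly_positive S G a" for a
  proof -
    have "Dr a \<in> set_pmf (bernoulli_pmf 1)"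
      using Dr that unfolding displayed_results_def by (auto simp: set_Pi_pmf PiE_dflt_def)
    then show ?thesis by (simp add: set_bernoulli_1)
  qed
  have "noisy_COMP n Dl alpha G Dr = S"
  proof (intro equalityI subsetI)
    fix i assume i: "i \<in> noisy_COMP n Dl alpha G Dr"
    then have "i < n" "\<not> real (card {a \<in> G i. \<not> Dr a}) \<ge> alpha * real Dl" unfolding noisy_COMP_def by auto
    then show "i \<in> S" using H by force
  next
    fix i assume i: "i \<in> S"
    then have "i < n" using S by auto
    have "Dr a" if "a \<in> G i" for a
    proof -
      have "a < m" using Gi[OF \<open>i < n\<close>] that by auto
      then show ?thesis using Da[of a] that i unfolding truly_positive_def by blast
    qed
    then have e: "{a \<in> G i. \<not> Dr a} = {}" by auto
    show "i \<in> noisy_COMP n Dl alpha G Dr" using \<open>i < n\<close> pos unfolding noisy_COMP_def by (simp add: e)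
  qed
  then show False using ne by simp
qed


lemma finite_DR: "finite (set_pmf (displayed_results m p q S G))"
  unfolding displayed_results_def
  by (simp add: set_Pi_pmf finite_PiE_dflt)

lemma inner_bound:
  assumes G: "G \<in> set_pmf (constant_column_design n m Dl)" and Dlm: "Dl \<le> m"
    and S: "S \<subseteq> {0..<n}" and al: "0 < alpha" and Dl1: "1 \<le> Dl"
    and mu: "0 < mu" "mu < 1" and p: "0 \<le> p" "p \<le> 1"
  shows "pmf (bind_pmf (displayed_results m p 0 S G) (\<lambda>Dr. return_pmf (noisy_COMP n Dl alpha G Dr = S))) True
    \<ge> 1 - (\<Sum>i\<in>{0..<n}-S. mu powr (-(alpha * Dl)) * (p + (1-p)*mu) ^ card (G i - \<Union>(G ` S)))"
proof -
  let ?DR = "displayed_results m p 0 S G"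
  let ?c = "mu powr (-(alpha * Dl))"
  let ?X = "\<lambda>i Dr. mu ^ card {a \<in> G i. \<not> Dr a}"
  have c0: "?c \<ge> 0" by simp
  have pos: "alpha * real Dl > 0" using al Dl1 by simp
  have Gi: "G i \<subseteq> {0..<m}" if "i < n" for i
    using G that Dlm unfolding constant_column_design_def
    by (auto simp: set_Pi_pmf PiE_dflt_def set_UU')
  have pw: "indicator {True} (noisy_COMP n Dl alpha G Dr = S) \<ge> 1 - (\<Sum>i\<in>{0..<n}-S. ?c * ?X i Dr)"
    if Dr: "Dr \<in> set_pmf ?DR" for Dr
  proof (cases "noisy_COMP n Dl alpha G Dr = S")
    case True
    have "(\<Sum>i\<in>{0..<n}-S. ?c * ?X i Dr) \<ge> 0" using mu by (intro sum_nonneg) auto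
    then show ?thesis using True by simp
  next
    case False
    obtain i0 where i0: "i0 \<in> {0..<n} - S" "real (card {a \<in> G i0. \<not> Dr a}) < alpha * real Dl"
      using key_det[OF G Dlm Dr S pos False] by blast
    have "?c * ?X i0 Dr = mu powr (real (card {a \<in> G i0. \<not> Dr a}) - alpha * real Dl)"
      using mu by (simp add: powr_realpow[symmetric] powr_add[symmetric])
    also have "\<dots> \<ge> mu powr 0" using mu i0(2) by (intro powr_mono') auto
    finally have "?c * ?X i0 Dr \<ge> 1" using mu by simp
    moreover have "?c * ?X i0 Dr \<le> (\<Sum>i\<in>{0..<n}-S. ?c * ?X i Dr)"
      using i0(1) mu by (intro member_le_sum) auto
    ultimately show ?thesis using False by simp
  qed
  have "pmf (bind_pmf ?DR (\<lambda>Dr. return_pmf (noisy_COMP n Dl alpha G Dr = S))) True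
      = measure_pmf.expectation ?DR (\<lambda>Dr. indicator {True} (noisy_COMP n Dl alpha G Dr = S))"
    by (simp add: pmf_bind)
  also have "\<dots> \<ge> measure_pmf.expectation ?DR (\<lambda>Dr. 1 - (\<Sum>i\<in>{0..<n}-S. ?c * ?X i Dr))"
    by (intro integral_mono_AE AE_pmfI pw) (auto simp: integrable_measure_pmf_finite finite_DR)
  finally have 1: "pmf (bind_pmf ?DR (\<lambda>Dr. return_pmf (noisy_COMP n Dl alpha G Dr = S))) True
     \<ge> measure_pmf.expectation ?DR (\<lambda>Dr. 1 - (\<Sum>i\<in>{0..<n}-S. ?c * ?X i Dr))" .
  have "measure_pmf.expectation ?DR (\<lambda>Dr. 1 - (\<Sum>i\<in>{0..<n}-S. ?c * ?X i Dr))
      = 1 - (\<Sum>i\<in>{0..<n}-S. ?c * measure_pmf.expectation ?DR (?X i))"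
    by (subst Bochner_Integration.integral_diff)
       (auto simp: integrable_measure_pmf_finite finite_DR Bochner_Integration.integral_sum)
  also have "\<dots> = 1 - (\<Sum>i\<in>{0..<n}-S. ?c * (p + (1-p)*mu) ^ card (G i - \<Union>(G ` S)))"
  proof -
    have "measure_pmf.expectation ?DR (?X i) = (p + (1-p)*mu) ^ card (G i - \<Union>(G ` S))" if "i \<in> {0..<n}-S" for i
    proof -
      have "G i \<subseteq> {0..<m}" using Gi that by auto
      moreover then have "finite (G i)" using finite_subset by blast
      ultimately show ?thesis using noise[of "G i" m p mu S G] p mu by simp
    qed
    then show ?thesis by (intro arg_cong2[where f="(-)"] refl sum.cong) auto
  qed
  finally show ?thesis using 1 by simp
qed


lemma ccd_eq: "constant_column_design n m Dl = Pi_pmf {0..<n} {} (\<lambda>_. UU m Dl)"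
  unfolding constant_column_design_def Sets_def by simp

lemma fixed_S_bound:
  assumes Dlm: "Dl \<le> m" and S: "S \<subseteq> {0..<n}" and al: "0 < alpha" and Dl1: "1 \<le> Dl"
    and mu: "0 < mu" "mu < 1" and p: "0 \<le> p" "p \<le> 1"
  shows "pmf (bind_pmf (constant_column_design n m Dl) (\<lambda>G. bind_pmf (displayed_results m p 0 S G)
             (\<lambda>Dr. return_pmf (noisy_COMP n Dl alpha G Dr = S)))) True
    \<ge> 1 - real n * (mu powr (-(alpha * Dl)) * (1 - (1 - p) * (1 - mu) * (1 - real Dl / real m) ^ card S) ^ Dl)"
proof -
  let ?MG = "constant_column_design n m Dl"
  let ?c = "mu powr (-(alpha * Dl))"
  let ?g = "p + (1-p)*mu"
  let ?gb = "1 - (1 - p) * (1 - mu) * (1 - real Dl / real m) ^ card S"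
  have m0: "0 < m" using Dlm Dl1 by simp
  have "(1-p)*mu \<le> (1-p)*1" using mu p by (intro mult_left_mono) auto
  then have g0: "0 \<le> ?g" "?g \<le> 1" using mu p by auto
  have g1: "1 - ?g = (1 - p) * (1 - mu)" by (simp add: algebra_simps)
  have fin: "finite (set_pmf ?MG)" unfolding ccd_eq by (rule finite_set_Pi_UU) (use Dlm in auto)
  have "pmf (bind_pmf ?MG (\<lambda>G. bind_pmf (displayed_results m p 0 S G)
             (\<lambda>Dr. return_pmf (noisy_COMP n Dl alpha G Dr = S)))) True
      = measure_pmf.expectation ?MG (\<lambda>G. pmf (bind_pmf (displayed_results m p 0 S G)
             (\<lambda>Dr. return_pmf (noisy_COMP n Dl alpha G Dr = S))) True)"
    by (rule pmf_bind)
  also have "\<dots> \<ge> measure_pmf.expectation ?MG (\<lambda>G. 1 - (\<Sum>i\<in>{0..<n}-S. ?c * ?g ^ card (G i - \<Union>(G ` S))))"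
    by (intro integral_mono_AE AE_pmfI inner_bound[OF _ Dlm S al Dl1 mu p]) (auto simp: integrable_measure_pmf_finite fin)
  also have "measure_pmf.expectation ?MG (\<lambda>G. 1 - (\<Sum>i\<in>{0..<n}-S. ?c * ?g ^ card (G i - \<Union>(G ` S))))
      = 1 - (\<Sum>i\<in>{0..<n}-S. ?c * measure_pmf.expectation ?MG (\<lambda>G. ?g ^ card (G i - \<Union>(G ` S))))"
    by (subst Bochner_Integration.integral_diff)
       (auto simp: integrable_measure_pmf_finite fin Bochner_Integration.integral_sum)
  also have "\<dots> \<ge> 1 - (\<Sum>i\<in>{0..<n}-S. ?c * ?gb ^ Dl)"
  proof -
    have "measure_pmf.expectation ?MG (\<lambda>G. ?g ^ card (G i - \<Union>(G ` S))) \<le> ?gb ^ Dl" if "i \<in> {0..<n}-S" for i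
      using lemB[OF Dlm m0 g0, of i n S] that S unfolding ccd_eq g1 by auto
    then have "(\<Sum>i\<in>{0..<n}-S. ?c * measure_pmf.expectation ?MG (\<lambda>G. ?g ^ card (G i - \<Union>(G ` S))))
        \<le> (\<Sum>i\<in>{0..<n}-S. ?c * ?gb ^ Dl)"
      by (intro sum_mono mult_left_mono) auto
    then show ?thesis by simp
  qed
  also have "1 - (\<Sum>i\<in>{0..<n}-S. ?c * ?gb ^ Dl) \<ge> 1 - real n * (?c * ?gb ^ Dl)"
  proof -
    have gb0: "0 \<le> ?gb"
    proof -
      have "(1 - real Dl / real m) ^ card S \<le> 1" "0 \<le> (1 - real Dl / real m) ^ card S"
        using Dlm m0 by (auto intro!: power_le_one)
      moreover have "(1 - p) * (1 - mu) \<le> 1" "0 \<le> (1 - p) * (1 - mu)" using p mu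
        by (auto simp: mult_le_one)
      ultimately show ?thesis by (smt (verit) mult_le_one)
    qed
    have "card ({0..<n} - S) \<le> card {0..<n}" by (rule card_mono) auto
    then have "card ({0..<n} - S) \<le> n" by simp
    then have "real (card ({0..<n} - S)) * (?c * ?gb ^ Dl) \<le> real n * (?c * ?gb ^ Dl)"
      using gb0 by (intro mult_right_mono) auto
    then show ?thesis by simp
  qed
  finally show ?thesis by simp
qed

lemma success_bound:
  assumes Dlm: "Dl \<le> m" and kn: "k \<le> n" and al: "0 < alpha" and Dl1: "1 \<le> Dl"
    and mu: "0 < mu" "mu < 1" and p: "0 \<le> p" "p \<le> 1"
  shows "COMP_success_prob n k m Dl p 0 alpha
    \<ge> 1 - real n * (mu powr (-(alpha * Dl)) * (1 - (1 - p) * (1 - mu) * (1 - real Dl / real m) ^ k) ^ Dl)"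
proof -
  let ?B = "1 - real n * (mu powr (-(alpha * Dl)) * (1 - (1 - p) * (1 - mu) * (1 - real Dl / real m) ^ k) ^ Dl)"
  let ?F = "\<lambda>S. bind_pmf (constant_column_design n m Dl) (\<lambda>G. bind_pmf (displayed_results m p 0 S G)
             (\<lambda>Dr. return_pmf (noisy_COMP n Dl alpha G Dr = S)))"
  have finI: "finite (infected_sets n k)" unfolding infected_sets_def
    by (rule finite_subset[of _ "Pow {0..<n}"]) auto
  have "{0..<k} \<in> infected_sets n k" using kn by (auto simp: infected_sets_def)
  then have neI: "infected_sets n k \<noteq> {}" by auto
  have "COMP_success_prob n k m Dl p 0 alpha = pmf (bind_pmf (pmf_of_set (infected_sets n k)) ?F) True"
    unfolding COMP_success_prob_def by (simp add: measure_pmf_single)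
  also have "\<dots> = measure_pmf.expectation (pmf_of_set (infected_sets n k)) (\<lambda>S. pmf (?F S) True)"
    by (rule pmf_bind)
  also have "\<dots> \<ge> measure_pmf.expectation (pmf_of_set (infected_sets n k)) (\<lambda>S. ?B)"
  proof (intro integral_mono_AE AE_pmfI)
    fix S assume "S \<in> set_pmf (pmf_of_set (infected_sets n k))"
    then have S: "S \<subseteq> {0..<n}" "card S = k" using finI neI by (auto simp: infected_sets_def)
    show "?B \<le> pmf (?F S) True" using fixed_S_bound[OF Dlm S(1) al Dl1 mu p] S(2) by simp
  qed (auto simp: integrable_measure_pmf_finite finI neI)
  finally show ?thesis by simp
qed


lemma ln_neg_aux: "0 < x \<Longrightarrow> x < 1 \<Longrightarrow> ln (1 - x) < (0::real)"
  by simp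

lemma choose_d:
  fixes p \<theta> \<epsilon> c :: real
  assumes "0 < p" "p < 1" "0 < \<theta>" "\<theta> < 1" "\<epsilon> > 0"
    and "c > (1 + \<epsilon>) * (1 / (1 - \<theta>)) *
               (INF d\<in>{0<..}. 1 / (- d * ln (1 - exp (- d) * (1 - p))))"
  shows "\<exists>d>0. c * (1 - \<theta>) * (- d * ln (1 - exp (- d) * (1 - p))) > 1"
proof -
  let ?f = "\<lambda>d::real. 1 / (- d * ln (1 - exp (- d) * (1 - p)))"
  have gpos: "- d * ln (1 - exp (- d) * (1 - p)) > 0" if "d > 0" for d
  proof -
    have "exp (-d) * (1 - p) > 0" using assms by simp
    moreover have "exp (-d) * (1 - p) < 1"
    proof -
      have "exp (-d) < 1" using that by simp
      then show ?thesis using assms by (smt (verit) mult_less_cancel_right2 exp_gt_zero)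
    qed
    ultimately have "ln (1 - exp (- d) * (1 - p)) < 0" by (intro ln_neg_aux)
    then show ?thesis using that by (simp add: mult_pos_neg)
  qed
  have ne: "?f ` {0<..} \<noteq> {}" by auto
  have inf0: "(INF d\<in>{0<..}. ?f d) \<ge> 0"
  proof (rule cINF_greatest)
    fix x :: real assume "x \<in> {0<..}"
    then have "0 < ?f x" using gpos[of x] by (intro divide_pos_pos) auto
    then show "0 \<le> ?f x" by (rule less_imp_le)
  qed simp
  have "(INF d\<in>{0<..}. ?f d) < c * (1 - \<theta>)"
  proof -
    have "(1 + \<epsilon>) * (INF d\<in>{0<..}. ?f d) < c * (1 - \<theta>)"
      using assms(6) assms(4) by (simp add: field_simps)
    moreover have "(INF d\<in>{0<..}. ?f d) \<le> (1 + \<epsilon>) * (INF d\<in>{0<..}. ?f d)"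
      using inf0 assms(5) by (simp add: algebra_simps)
    ultimately show ?thesis by linarith
  qed
  then obtain y where "y \<in> ?f ` {0<..}" "y < c * (1 - \<theta>)" using cInf_lessD[OF ne] by blast
  then obtain d where d: "d > 0" "?f d < c * (1 - \<theta>)" by auto
  have "1 < c * (1 - \<theta>) * (- d * ln (1 - exp (- d) * (1 - p)))"
    using d gpos[OF d(1)] by (simp add: divide_simps)
  then show ?thesis using d(1) by blast
qed


lemma choose_delta:
  fixes p \<theta> c d :: real
  assumes "0 < p" "p < 1" "d > 0"
    and "c * (1 - \<theta>) * (- d * ln (1 - exp (- d) * (1 - p))) > 1"
  shows "\<exists>\<delta>. 0 < \<delta> \<and> \<delta> < 1 \<and> c * d * (1 - \<theta>) * (- ln (1 - (1 - p) * (1 - \<delta>)^2 * exp (- d)) - \<delta>) > 1"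
proof -
  let ?h = "\<lambda>\<delta>. c * d * (1 - \<theta>) * (- ln (1 - (1 - p) * (1 - \<delta>)^2 * exp (- d)) - \<delta>)"
  have ne: "1 - (1 - p) * exp (- d) \<noteq> 0"
  proof -
    have "exp (-d) < 1" using assms by simp
    then have "(1 - p) * exp (- d) < 1" using assms by (smt (verit) mult_less_cancel_left2 exp_gt_zero)
    then show ?thesis by simp
  qed
  have "(?h \<longlongrightarrow> c * d * (1 - \<theta>) * (- ln (1 - (1 - p) * (1 - 0)^2 * exp (- d)) - 0)) (at_right 0)"
    by (intro tendsto_intros) (use ne in auto)
  moreover have "c * d * (1 - \<theta>) * (- ln (1 - (1 - p) * (1 - 0)^2 * exp (- d)) - 0) > 1"
    using assms(4) by (simp add: ac_simps)
  ultimately have "eventually (\<lambda>\<delta>. ?h \<delta> > 1) (at_right 0)"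
    by (rule order_tendstoD)
  moreover have "eventually (\<lambda>\<delta>. \<delta> \<in> {0<..<1}) (at_right (0::real))"
    by (rule eventually_at_right_real) simp
  ultimately have "eventually (\<lambda>\<delta>. ?h \<delta> > 1 \<and> \<delta> \<in> {0<..<1}) (at_right (0::real))"
    by (rule eventually_conj)
  then obtain \<delta> where "?h \<delta> > 1 \<and> \<delta> \<in> {0<..<1}"
    using eventually_happens' trivial_limit_at_right_real by blast
  then show ?thesis by auto
qed


lemma rho_bound:
  fixes c d L kk u v \<delta> :: real and Dl M k :: nat
  assumes Dl: "real Dl \<le> c * d * L + 1" and M: "c * kk * L \<le> real M"
    and c: "c > 0" and d: "d > 0" and L: "L > 0" and kk: "kk = real k" "kk > 0"
    and u: "u = d / kk + 1 / (c * kk * L)" and v: "v = d + 1 / (c * L)"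
    and u1: "u < 1" and vu: "v / (1 - u) \<le> d - ln (1 - \<delta>)" and \<delta>: "0 < \<delta>" "\<delta> < 1"
  shows "(1 - real Dl / real M) ^ k \<ge> exp (- d) * (1 - \<delta>)"
proof -
  define x where "x = real Dl / real M"
  have ckL: "c * kk * L > 0" using c kk L by simp
  have M0: "real M > 0" using ckL M by linarith
  have x0: "x \<ge> 0" unfolding x_def by simp
  have "x \<le> (c * d * L + 1) / real M" unfolding x_def using Dl M0 by (intro divide_right_mono) auto
  also have "\<dots> \<le> (c * d * L + 1) / (c * kk * L)"
    using ckL M c d L by (intro divide_left_mono) (auto intro: add_nonneg_nonneg mult_nonneg_nonneg)
  also have "\<dots> = u" unfolding u using c kk L by (simp add: field_simps)
  finally have xu: "x \<le> u" .
  have x1: "x < 1" using xu u1 by linarith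
  have kx: "kk * x \<le> v"
  proof -
    have "kk * x \<le> kk * u" using xu kk by (intro mult_left_mono) auto
    also have "kk * u = v" unfolding u v using c kk L by (simp add: field_simps)
    finally show ?thesis .
  qed
  have lnx: "ln (1 - x) \<ge> - (x / (1 - x))"
  proof -
    have "ln (1 / (1 - x)) \<le> 1 / (1 - x) - 1" using x1 by (intro ln_le_minus_one) simp
    moreover have "ln (1 / (1 - x)) = - ln (1 - x)" using x1 by (simp add: ln_div)
    moreover have "1 / (1 - x) - 1 = x / (1 - x)" using x1 by (simp add: field_simps)
    ultimately show ?thesis by linarith
  qed
  have "(1 - x) ^ k = exp (kk * ln (1 - x))"
    using x1 kk by (simp add: exp_ln ln_realpow[symmetric])
  also have "exp (kk * ln (1 - x)) \<ge> exp (- (kk * x / (1 - x)))"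
  proof -
    have "kk * ln (1 - x) \<ge> kk * (- (x / (1 - x)))" using lnx kk by (intro mult_left_mono) auto
    then show ?thesis by simp
  qed
  finally have 1: "(1 - x) ^ k \<ge> exp (- (kk * x / (1 - x)))" .
  have "kk * x / (1 - x) \<le> v / (1 - u)"
  proof (rule frac_le)
    show "0 \<le> v" unfolding v using c d L by simp
    show "kk * x \<le> v" by (rule kx)
    show "0 < 1 - u" using u1 by simp
    show "1 - u \<le> 1 - x" using xu by simp
  qed
  then have "kk * x / (1 - x) \<le> d - ln (1 - \<delta>)" using vu by linarith
  then have "exp (- (kk * x / (1 - x))) \<ge> exp (- (d - ln (1 - \<delta>)))" by simp
  also have "exp (- (d - ln (1 - \<delta>))) = exp (- d) * (1 - \<delta>)"
    using \<delta> by (simp add: exp_diff exp_minus field_simps)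
  finally show ?thesis using 1 unfolding x_def by linarith
qed

lemma final_bound:
  fixes c d L \<delta> p \<theta> r :: real and Dl n :: nat
  assumes r: "r \<ge> exp (- d) * (1 - \<delta>)" "r \<le> 1" and DlL: "real Dl \<ge> c * d * L"
    and Lb: "L \<ge> (1 - \<theta>) * ln (real n) - ln 2" and n: "n > 0"
    and c: "c > 0" and d: "d > 0" and \<delta>: "0 < \<delta>" "\<delta> < 1" and p: "0 < p" "p < 1"
    and A: "A = - ln (1 - (1 - p) * (1 - \<delta>)^2 * exp (- d)) - \<delta>" "A > 0"
  shows "real n * (\<delta> powr (- (\<delta> / (- ln \<delta>) * real Dl)) * (1 - (1 - p) * (1 - \<delta>) * r) ^ Dl)
           \<le> exp (- (c * d * (1 - \<theta>) * A - 1) * ln (real n) + c * d * A * ln 2)"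
proof -
  define q0 where "q0 = 1 - (1 - p) * (1 - \<delta>)^2 * exp (- d)"
  have e1: "exp (- d) < 1" using d by simp
  have q0pos: "q0 > 0"
  proof -
    have "(1 - \<delta>)^2 \<le> 1" using \<delta> by (simp add: power_le_one)
    then have "(1 - p) * (1 - \<delta>)^2 \<le> 1" using p \<delta> by (simp add: mult_le_one)
    then have "(1 - p) * (1 - \<delta>)^2 * exp (- d) < 1" using e1 p \<delta>
      by (smt (verit) exp_gt_zero mult_left_le_one_le mult_nonneg_nonneg zero_le_power2)
    then show ?thesis unfolding q0_def by simp
  qed
  have b0: "0 \<le> 1 - (1 - p) * (1 - \<delta>) * r"
  proof -
    have "(1 - p) * (1 - \<delta>) \<le> 1" "0 \<le> (1 - p) * (1 - \<delta>)" using p \<delta> by (auto simp: mult_le_one)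
    moreover have "0 \<le> r" using r(1) \<delta> by (smt (verit) exp_gt_zero mult_nonneg_nonneg)
    ultimately show ?thesis using r(2) by (smt (verit) mult_le_one)
  qed
  have bq: "1 - (1 - p) * (1 - \<delta>) * r \<le> q0"
  proof -
    have "(1 - p) * (1 - \<delta>) * (exp (- d) * (1 - \<delta>)) \<le> (1 - p) * (1 - \<delta>) * r"
      using r(1) p \<delta> by (intro mult_left_mono) auto
    then show ?thesis unfolding q0_def by (simp add: power2_eq_square algebra_simps)
  qed
  have lnd: "ln \<delta> < 0" using \<delta> by simp
  have pw: "\<delta> powr (- (\<delta> / (- ln \<delta>) * real Dl)) = exp (\<delta> * real Dl)"
    using \<delta> lnd by (simp add: powr_def field_simps)
  have qp: "(1 - (1 - p) * (1 - \<delta>) * r) ^ Dl \<le> exp (real Dl * ln q0)"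
  proof -
    have "(1 - (1 - p) * (1 - \<delta>) * r) ^ Dl \<le> q0 ^ Dl" using b0 bq by (intro power_mono)
    also have "q0 ^ Dl = exp (real Dl * ln q0)" using q0pos by (simp add: exp_ln ln_realpow[symmetric])
    finally show ?thesis .
  qed
  have "real n * (\<delta> powr (- (\<delta> / (- ln \<delta>) * real Dl)) * (1 - (1 - p) * (1 - \<delta>) * r) ^ Dl)
      \<le> exp (ln (real n)) * (exp (\<delta> * real Dl) * exp (real Dl * ln q0))"
    using n qp b0 unfolding pw by (intro mult_mono) auto
  also have "\<dots> = exp (ln (real n) - real Dl * A)"
    unfolding A(1) q0_def[symmetric] by (simp add: exp_add[symmetric] algebra_simps)
  also have "\<dots> \<le> exp (- (c * d * (1 - \<theta>) * A - 1) * ln (real n) + c * d * A * ln 2)"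
  proof -
    have "real Dl * A \<ge> c * d * L * A" using DlL A(2) by (intro mult_right_mono) auto
    moreover have "c * d * L * A \<ge> c * d * ((1 - \<theta>) * ln (real n) - ln 2) * A"
      using Lb c d A(2) by (intro mult_right_mono mult_left_mono) auto
    ultimately have "ln (real n) - real Dl * A \<le> - (c * d * (1 - \<theta>) * A - 1) * ln (real n) + c * d * A * ln 2"
      by (simp add: algebra_simps)
    then show ?thesis by simp
  qed
  finally show ?thesis .
qed


lemma asym:
  fixes k :: "nat \<Rightarrow> nat" and \<theta> c d \<delta> p A :: real and L :: "nat \<Rightarrow> real" and M Dl :: "nat \<Rightarrow> nat"
  assumes th: "0 < \<theta>" "\<theta> < 1" and klim: "(\<lambda>n. real (k n) / real n powr \<theta>) \<longlonglongrightarrow> 1"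
    and c: "c > 0" and d: "d > 0" and \<delta>: "0 < \<delta>" "\<delta> < 1" and p: "0 < p" "p < 1"
    and A: "A = - ln (1 - (1 - p) * (1 - \<delta>)^2 * exp (- d)) - \<delta>" "A > 0"
    and Ldef: "L = (\<lambda>n. ln (real n / real (k n)))"
    and Mdef: "M = (\<lambda>n. nat \<lceil>c * real (k n) * L n\<rceil>)"
    and Dldef: "Dl = (\<lambda>n. nat \<lceil>c * d * L n\<rceil>)"
  shows "eventually (\<lambda>n. 1 \<le> Dl n \<and> Dl n \<le> M n \<and> k n \<le> n \<and>
     real n * (\<delta> powr (- (\<delta> / (- ln \<delta>) * real (Dl n))) * (1 - (1 - p) * (1 - \<delta>) * (1 - real (Dl n) / real (M n)) ^ (k n)) ^ (Dl n))
           \<le> exp (- (c * d * (1 - \<theta>) * A - 1) * ln (real n) + c * d * A * ln 2)) sequentially"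
proof -
  have lnat: "filterlim (\<lambda>n. ln (real n)) at_top sequentially"
    by (rule filterlim_compose[OF ln_at_top filterlim_real_sequentially])
  have Lb_at: "filterlim (\<lambda>n. (- ln 2) + (1 - \<theta>) * ln (real n)) at_top sequentially"
    by (intro filterlim_tendsto_add_at_top[OF tendsto_const] filterlim_tendsto_pos_mult_at_top[OF tendsto_const _ lnat]) (use th in auto)
  have exp_at: "filterlim (\<lambda>n. (1/2) * exp (\<theta> * ln (real n))) at_top sequentially"
    by (intro filterlim_tendsto_pos_mult_at_top[OF tendsto_const] filterlim_compose[OF exp_at_top]
          filterlim_tendsto_pos_mult_at_top[OF tendsto_const _ lnat]) (use th in auto)
  have ev1: "eventually (\<lambda>n. real (k n) / real n powr \<theta> > 1/2) sequentially"
    using klim by (rule order_tendstoD) simp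
  have ev2: "eventually (\<lambda>n. real (k n) / real n powr \<theta> < 2) sequentially"
    using klim by (rule order_tendstoD) simp
  have ev3: "eventually (\<lambda>n. n \<ge> 1) sequentially" by (rule eventually_ge_at_top)
  define B where "B = (\<lambda>n. n \<ge> 1 \<and> real (k n) / real n powr \<theta> > 1/2 \<and> real (k n) / real n powr \<theta> < 2)"
  have evB: "eventually B sequentially" unfolding B_def using ev1 ev2 ev3 by eventually_elim auto
  have Bfacts: "real (k n) \<ge> (1/2) * exp (\<theta> * ln (real n)) \<and> real (k n) > 0 \<and> L n \<ge> (- ln 2) + (1 - \<theta>) * ln (real n)"
    if "B n" for n
  proof -
    have n1: "n \<ge> 1" and b1: "real (k n) / real n powr \<theta> > 1/2" and b2: "real (k n) / real n powr \<theta> < 2"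
      using that unfolding B_def by auto
    have pw: "real n powr \<theta> = exp (\<theta> * ln (real n))" using n1 by (simp add: powr_def)
    have pp: "real n powr \<theta> > 0" using n1 by simp
    have k1: "real (k n) > (1/2) * exp (\<theta> * ln (real n))" using b1 pp unfolding pw by (simp add: field_simps)
    have "(1/2) * exp (\<theta> * ln (real n)) > 0" by simp
    then have k0: "real (k n) > 0" using k1 by linarith
    have k2: "real (k n) < 2 * real n powr \<theta>" using b2 pp by (simp add: field_simps)
    have "ln (real (k n)) < ln (2 * real n powr \<theta>)" using k0 k2 pp by (subst ln_less_cancel_iff) auto
    also have "ln (2 * real n powr \<theta>) = ln 2 + \<theta> * ln (real n)" using pp n1 by (simp add: ln_mult ln_powr)
    finally have "ln (real (k n)) < ln 2 + \<theta> * ln (real n)" .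
    moreover have "L n = ln (real n) - ln (real (k n))" unfolding Ldef using k0 n1 by (simp add: ln_div)
    ultimately have "L n \<ge> (- ln 2) + (1 - \<theta>) * ln (real n)" by (simp add: algebra_simps)
    then show ?thesis using k1 k0 by simp
  qed
  have kat: "filterlim (\<lambda>n. real (k n)) at_top sequentially"
    by (rule filterlim_at_top_mono[OF exp_at]) (use evB Bfacts in \<open>auto elim: eventually_mono\<close>)
  have Lat: "filterlim L at_top sequentially"
    by (rule filterlim_at_top_mono[OF Lb_at]) (use evB Bfacts in \<open>auto elim: eventually_mono\<close>)
  have cLat: "filterlim (\<lambda>n. c * L n) at_top sequentially"
    by (rule filterlim_tendsto_pos_mult_at_top[OF tendsto_const c Lat])
  have ckLat: "filterlim (\<lambda>n. c * real (k n) * L n) at_top sequentially"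
    unfolding mult.assoc
    by (rule filterlim_tendsto_pos_mult_at_top[OF tendsto_const c filterlim_at_top_mult_at_top[OF kat Lat]])
  define u where "u = (\<lambda>n. d / real (k n) + 1 / (c * real (k n) * L n))"
  define v where "v = (\<lambda>n. d + 1 / (c * L n))"
  have ulim: "u \<longlonglongrightarrow> 0" unfolding u_def
    by (intro tendsto_add_zero tendsto_divide_0[OF tendsto_const] filterlim_at_top_imp_at_infinity kat ckLat)
  have vlim: "v \<longlonglongrightarrow> d + 0" unfolding v_def
    by (intro tendsto_add tendsto_const tendsto_divide_0[OF tendsto_const] filterlim_at_top_imp_at_infinity cLat)
  have vulim: "(\<lambda>n. v n / (1 - u n)) \<longlonglongrightarrow> (d + 0) / (1 - 0)"
    by (intro tendsto_divide vlim tendsto_diff tendsto_const ulim) simp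
  have lnd: "ln (1 - \<delta>) < 0" using \<delta> by simp
  have ev4: "eventually (\<lambda>n. v n / (1 - u n) < d - ln (1 - \<delta>)) sequentially"
    using vulim by (rule order_tendstoD) (use lnd in simp)
  have ev5: "eventually (\<lambda>n. u n < 1) sequentially"
    using ulim by (rule order_tendstoD) simp
  have ev6: "eventually (\<lambda>n. c * L n \<ge> 1) sequentially"
    using cLat unfolding filterlim_at_top by blast
  have ev7: "eventually (\<lambda>n. real (k n) \<ge> d + 1) sequentially"
    using kat unfolding filterlim_at_top by blast
  have ev8: "eventually (\<lambda>n. L n > 0) sequentially"
    using Lat unfolding filterlim_at_top_dense by blast
  show ?thesis
    using evB ev4 ev5 ev6 ev7 ev8
  proof eventually_elim
    case (elim n)
    from Bfacts[OF elim(1)] have k0: "real (k n) > 0" and LB: "L n \<ge> (- ln 2) + (1 - \<theta>) * ln (real n)" by auto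
    have n1: "n \<ge> 1" using elim(1) unfolding B_def by auto
    have L0: "L n > 0" using elim(6) .
    have cdL: "c * d * L n > 0" using c d L0 by simp
    have ckL: "c * real (k n) * L n > 0" using c k0 L0 by simp
    have Dlr: "real (Dl n) = of_int \<lceil>c * d * L n\<rceil>" unfolding Dldef using cdL by simp
    have Mr: "real (M n) = of_int \<lceil>c * real (k n) * L n\<rceil>" unfolding Mdef using ckL by simp
    have "real (Dl n) > 0" using Dlr cdL le_of_int_ceiling[of "c * d * L n"] by linarith
    then have Dl1: "1 \<le> Dl n" by simp
    have "c * d * L n \<le> c * real (k n) * L n" using elim(5) c L0 by (intro mult_right_mono mult_left_mono) auto
    then have DlM: "Dl n \<le> M n" unfolding Dldef Mdef by (intro nat_mono ceiling_mono)
    have kn: "k n \<le> n"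
    proof -
      have "ln (real n / real (k n)) > 0" using L0 unfolding Ldef by simp
      then have "real n / real (k n) > 1" using k0 n1 by (simp add: ln_gt_zero_iff)
      then show ?thesis using k0 by (simp add: field_simps)
    qed
    have rb: "(1 - real (Dl n) / real (M n)) ^ (k n) \<ge> exp (- d) * (1 - \<delta>)"
    proof (rule rho_bound[where c=c and d=d and L="L n" and kk="real (k n)" and u="u n" and v="v n"])
      show "real (Dl n) \<le> c * d * L n + 1" unfolding Dlr by simp
      show "c * real (k n) * L n \<le> real (M n)" unfolding Mr by simp
    qed (use c d L0 k0 elim \<delta> in \<open>auto simp: u_def v_def\<close>)
    have r1: "(1 - real (Dl n) / real (M n)) ^ (k n) \<le> 1"
    proof -
      have "real (M n) > 0" using Dl1 DlM by simp
      then have "0 \<le> 1 - real (Dl n) / real (M n)" "1 - real (Dl n) / real (M n) \<le> 1"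
        using DlM by (auto simp: field_simps)
      then show ?thesis by (rule power_le_one)
    qed
    have DlL: "real (Dl n) \<ge> c * d * L n" unfolding Dlr by simp
    have "real n * (\<delta> powr (- (\<delta> / (- ln \<delta>) * real (Dl n))) * (1 - (1 - p) * (1 - \<delta>) * (1 - real (Dl n) / real (M n)) ^ (k n)) ^ (Dl n))
           \<le> exp (- (c * d * (1 - \<theta>) * A - 1) * ln (real n) + c * d * A * ln 2)"
      by (rule final_bound[OF rb r1 DlL _ _ c d \<delta> p A]) (use LB n1 in auto)
    then show ?case using Dl1 DlM kn by simp
  qed
qed


theorem corollary2p9:
  fixes p \<theta> \<epsilon> c :: real and k :: "nat \<Rightarrow> nat"
  assumes "0 < p" "p < 1" "0 < \<theta>" "\<theta> < 1" "\<epsilon> > 0"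
    and "(\<lambda>n. real (k n) / real n powr \<theta>) \<longlonglongrightarrow> 1"
    and "c > (1 + \<epsilon>) * (1 / (1 - \<theta>)) *
               (INF d\<in>{0<..}. 1 / (- d * ln (1 - exp (- d) * (1 - p))))"
  shows "\<exists>d>0. \<exists>\<alpha>::real.
           (\<lambda>n. COMP_success_prob n (k n)
                   (nat \<lceil>c * real (k n) * ln (real n / real (k n))\<rceil>)
                   (nat \<lceil>c * d * ln (real n / real (k n))\<rceil>) p 0 \<alpha>) \<longlonglongrightarrow> 1"
proof -
  obtain d where d: "d > 0" "c * (1 - \<theta>) * (- d * ln (1 - exp (- d) * (1 - p))) > 1"
    using choose_d[OF assms(1-5) assms(7)] by blast
  have g0: "- d * ln (1 - exp (- d) * (1 - p)) > 0"
  proof -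
    have "exp (-d) < 1" using d by simp
    then have "exp (- d) * (1 - p) < 1" using assms(1,2) by (smt (verit) mult_less_cancel_right2 exp_gt_zero)
    moreover have "exp (- d) * (1 - p) > 0" using assms(2) by simp
    ultimately have "ln (1 - exp (- d) * (1 - p)) < 0" by simp
    then show ?thesis using d(1) by (simp add: mult_pos_neg)
  qed
  have c0: "c > 0"
  proof (rule ccontr)
    assume "\<not> c > 0"
    then have "c * (1 - \<theta>) \<le> 0" using assms(4) by (simp add: mult_nonpos_nonneg)
    then have "c * (1 - \<theta>) * (- d * ln (1 - exp (- d) * (1 - p))) \<le> 0"
      using mult_nonpos_nonneg less_imp_le[OF g0] by blast
    then show False using d(2) by simp
  qed
  obtain \<delta> where \<delta>: "0 < \<delta>" "\<delta> < 1"
    "c * d * (1 - \<theta>) * (- ln (1 - (1 - p) * (1 - \<delta>)^2 * exp (- d)) - \<delta>) > 1"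
    using choose_delta[OF assms(1,2) d(1) d(2)] by blast
  define A where "A = - ln (1 - (1 - p) * (1 - \<delta>)^2 * exp (- d)) - \<delta>"
  have K: "c * d * (1 - \<theta>) * A > 1" using \<delta>(3) unfolding A_def .
  have A0: "A > 0"
  proof (rule ccontr)
    assume "\<not> A > 0"
    moreover have "c * d * (1 - \<theta>) > 0" using c0 d(1) assms(4) by simp
    ultimately have "c * d * (1 - \<theta>) * A \<le> 0" by (simp add: mult_nonneg_nonpos)
    then show False using K by simp
  qed
  define \<alpha> where "\<alpha> = \<delta> / (- ln \<delta>)"
  have \<alpha>0: "\<alpha> > 0" unfolding \<alpha>_def using \<delta> by (simp add: divide_pos_neg)
  define L where "L = (\<lambda>n. ln (real n / real (k n)))"
  define M where "M = (\<lambda>n. nat \<lceil>c * real (k n) * L n\<rceil>)"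
  define Dl where "Dl = (\<lambda>n. nat \<lceil>c * d * L n\<rceil>)"
  define E where "E = (\<lambda>n. exp (- (c * d * (1 - \<theta>) * A - 1) * ln (real n) + c * d * A * ln 2))"
  have ev: "eventually (\<lambda>n. 1 \<le> Dl n \<and> Dl n \<le> M n \<and> k n \<le> n \<and>
     real n * (\<delta> powr (- (\<delta> / (- ln \<delta>) * real (Dl n))) * (1 - (1 - p) * (1 - \<delta>) * (1 - real (Dl n) / real (M n)) ^ (k n)) ^ (Dl n))
           \<le> E n) sequentially"
    unfolding E_def
    by (rule asym[OF assms(3,4,6) c0 d(1) \<delta>(1,2) assms(1,2) A_def A0 L_def M_def Dl_def])
  have lower: "eventually (\<lambda>n. 1 - E n \<le> COMP_success_prob n (k n) (M n) (Dl n) p 0 \<alpha>) sequentially"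
    using ev
  proof eventually_elim
    case (elim n)
    have "COMP_success_prob n (k n) (M n) (Dl n) p 0 \<alpha>
        \<ge> 1 - real n * (\<delta> powr (-(\<alpha> * Dl n)) * (1 - (1 - p) * (1 - \<delta>) * (1 - real (Dl n) / real (M n)) ^ (k n)) ^ (Dl n))"
      by (rule success_bound) (use elim \<alpha>0 \<delta> assms(1,2) in auto)
    then show ?case using elim unfolding \<alpha>_def by linarith
  qed
  have upper: "eventually (\<lambda>n. COMP_success_prob n (k n) (M n) (Dl n) p 0 \<alpha> \<le> 1) sequentially"
    unfolding COMP_success_prob_def by simp
  have Elim: "E \<longlonglongrightarrow> 0"
  proof -
    have "filterlim (\<lambda>n. (- (c * d * A * ln 2)) + (c * d * (1 - \<theta>) * A - 1) * ln (real n)) at_top sequentially"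
      by (intro filterlim_tendsto_add_at_top[OF tendsto_const]
            filterlim_tendsto_pos_mult_at_top[OF tendsto_const _ filterlim_compose[OF ln_at_top filterlim_real_sequentially]])
         (use K in auto)
    then have "filterlim (\<lambda>n. - ((- (c * d * A * ln 2)) + (c * d * (1 - \<theta>) * A - 1) * ln (real n))) at_bot sequentially"
      by (simp add: filterlim_uminus_at_bot)
    then have "((\<lambda>n. exp (- ((- (c * d * A * ln 2)) + (c * d * (1 - \<theta>) * A - 1) * ln (real n)))) \<longlongrightarrow> 0) sequentially"
      by (rule filterlim_compose[OF exp_at_bot])
    moreover have "E = (\<lambda>n. exp (- ((- (c * d * A * ln 2)) + (c * d * (1 - \<theta>) * A - 1) * ln (real n))))"
      unfolding E_def by (rule ext) (simp add: algebra_simps)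
    ultimately show ?thesis by simp
  qed
  have "(\<lambda>n. COMP_success_prob n (k n) (M n) (Dl n) p 0 \<alpha>) \<longlonglongrightarrow> 1"
  proof (rule tendsto_sandwich[OF lower upper])
    show "(\<lambda>n. 1 - E n) \<longlonglongrightarrow> 1" using tendsto_diff[OF tendsto_const Elim, of 1] by simp
  qed simp
  then show ?thesis using d(1) unfolding M_def Dl_def L_def by blast
qed

end
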